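(* Let $E$ be an Anderson $t$-module of dimension $d$ over $\mathscr O_L$ and $P\in A$ a monic irreducible polynomial. For all $a\in A\setminus\{0\}$ and all $x\in\mathbb T_z(L_P)^d\setminus\{0\}$, we have $\widetilde E_a(x)\ne0$.
   Context: $\mathbb F_q$ finite field, $A=\mathbb F_q[\theta]$, $K=\mathbb F_q(\theta)$, $L/K$ finite, $\mathscr O_L$ integral closure of $A$ in $L$, $\tau$ the $q$-Frobenius. An Anderson $t$-module of dimension $d$ over $\mathscr O_L$ is an $\mathbb F_q$-algebra homomorphism $E:A\to M_d(\mathscr O_L)\{\tau\}$, $E_a=\sum_iE_{a,i}\tau^i$, with $(E_{a,0}-aI_d)^d=0$ and $\deg_\tau E_\theta>0$. With $z$ an indeterminate fixed by $\tau$, the $z$-twist is $\widetilde E_a=\sum_iE_{a,i}z^i\tau^i$, acting on $d$-tuples. $K_P$ is the $P$-adic completion of $K$, $\mathbb T_z(K_P)$ the Tate algebra in $z$ over $K_P$, and $\mathbb T_z(L_P)=L\otimes_K\mathbb T_z(K_P)$, on which $\tau$ acts by $q$-th powers on $L\otimes K_P$-coefficients and trivially on $z$. *)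

theory Defs
  imports "HOL-Computational_Algebra.Polynomial" "HOL-Computational_Algebra.Fraction_Field" "HOL-Library.Cardinality"
begin

(* A = Fq[theta] is  'a poly  with  'a :: {finite, field},  K = Fq(theta) is  'a poly fract. *)

definition embA :: "'a::field poly \<Rightarrow> 'a poly fract" where
  "embA a = Fract a 1"

definition theta :: "'a::field poly" where
  "theta = [:0, 1:]"

definition vP :: "'a::field poly \<Rightarrow> 'a poly fract \<Rightarrow> int" where
  "vP P x = (THE m. \<exists>u w. w \<noteq> 0 \<and> \<not> P dvd u \<and> \<not> P dvd w \<and>
                         x = (Fract P 1) powi m * Fract u w)"

definition ring_hom_fun :: "('r::ring_1 \<Rightarrow> 's::ring_1) \<Rightarrow> bool" where
  "ring_hom_fun f \<longleftrightarrow> f 1 = 1 \<and> (\<forall>x y. f (x + y) = f x + f y) \<and> (\<forall>x y. f (x * y) = f x * f y)"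

(* "small N y":  y = 0 or w(y) >= N, for a valuation w (w 0 is irrelevant, as if w 0 = infinity) *)
definition small :: "('k \<Rightarrow> int) \<Rightarrow> int \<Rightarrow> 'k::zero \<Rightarrow> bool" where
  "small w N y \<longleftrightarrow> y = 0 \<or> N \<le> w y"

(* (KP, iota, w) is the P-adic completion of K: a complete discretely valued field extending
   (K, v_P) in which K is dense. This determines KP up to unique isomorphism. *)
definition is_P_adic_completion ::
  "'a::field poly \<Rightarrow> ('a poly fract \<Rightarrow> 'kp::field) \<Rightarrow> ('kp \<Rightarrow> int) \<Rightarrow> bool" where
  "is_P_adic_completion P \<iota> w \<longleftrightarrow>
     ring_hom_fun \<iota> \<and>
     (\<forall>x y. x \<noteq> 0 \<longrightarrow> y \<noteq> 0 \<longrightarrow> w (x * y) = w x + w y) \<and>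
     (\<forall>x y. x \<noteq> 0 \<longrightarrow> y \<noteq> 0 \<longrightarrow> x + y \<noteq> 0 \<longrightarrow> min (w x) (w y) \<le> w (x + y)) \<and>
     (\<forall>x. x \<noteq> 0 \<longrightarrow> w (\<iota> x) = vP P x) \<and>
     (\<forall>y N. \<exists>x. small w N (y - \<iota> x)) \<and>
     (\<forall>s :: nat \<Rightarrow> 'kp. (\<forall>N. \<exists>M. \<forall>m n. M \<le> m \<longrightarrow> M \<le> n \<longrightarrow> small w N (s m - s n)) \<longrightarrow>
        (\<exists>l. \<forall>N. \<exists>M. \<forall>m. M \<le> m \<longrightarrow> small w N (s m - l)))"

definition is_basis :: "('a::field poly fract \<Rightarrow> 'l::field) \<Rightarrow> (nat \<Rightarrow> 'l) \<Rightarrow> nat \<Rightarrow> bool" where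
  "is_basis \<sigma> b n \<longleftrightarrow>
     (\<forall>l. \<exists>c. l = (\<Sum>j<n. \<sigma> (c j) * b j)) \<and>
     (\<forall>c. (\<Sum>j<n. \<sigma> (c j) * b j) = 0 \<longrightarrow> (\<forall>j<n. c j = 0))"

definition coord :: "('a::field poly fract \<Rightarrow> 'l::field) \<Rightarrow> (nat \<Rightarrow> 'l) \<Rightarrow> nat \<Rightarrow> 'l \<Rightarrow> nat \<Rightarrow> 'a poly fract" where
  "coord \<sigma> b n l = (SOME c. l = (\<Sum>j<n. \<sigma> (c j) * b j))"

definition integral_over_A :: "('a::field poly fract \<Rightarrow> 'l::field) \<Rightarrow> 'l \<Rightarrow> bool" where
  "integral_over_A \<sigma> l \<longleftrightarrow> (\<exists>p :: 'a poly poly. lead_coeff p = 1 \<and>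
      (\<Sum>i\<le>degree p. \<sigma> (embA (coeff p i)) * l ^ i) = 0)"

(* Twisted polynomials in M_d(L){tau}: f i r c is the (r,c) entry of the coefficient of tau^i *)
type_synonym 'l twpoly = "nat \<Rightarrow> nat \<Rightarrow> nat \<Rightarrow> 'l"

definition tw_wf :: "('a::field poly fract \<Rightarrow> 'l::field) \<Rightarrow> nat \<Rightarrow> 'l twpoly \<Rightarrow> bool" where
  "tw_wf \<sigma> d f \<longleftrightarrow> finite {i. f i \<noteq> (\<lambda>_ _. 0)} \<and>
     (\<forall>i r c. (d \<le> r \<or> d \<le> c) \<longrightarrow> f i r c = 0) \<and>
     (\<forall>i r c. integral_over_A \<sigma> (f i r c))"

definition tw_add :: "'l::field twpoly \<Rightarrow> 'l twpoly \<Rightarrow> 'l twpoly" where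
  "tw_add f g = (\<lambda>i r c. f i r c + g i r c)"

(* (sum_i F_i tau^i)(sum_j G_j tau^j) = sum_{i,j} F_i G_j^{(q^i)} tau^{i+j} *)
definition tw_mul :: "nat \<Rightarrow> nat \<Rightarrow> 'l::field twpoly \<Rightarrow> 'l twpoly \<Rightarrow> 'l twpoly" where
  "tw_mul q d f g = (\<lambda>k r c. \<Sum>i\<le>k. \<Sum>m<d. f i r m * (g (k - i) m c) ^ (q ^ i))"

definition tw_one :: "nat \<Rightarrow> 'l::field twpoly" where
  "tw_one d = (\<lambda>i r c. if i = 0 \<and> r = c \<and> r < d then 1 else 0)"

definition mat_mul :: "nat \<Rightarrow> (nat \<Rightarrow> nat \<Rightarrow> 'l::field) \<Rightarrow> (nat \<Rightarrow> nat \<Rightarrow> 'l) \<Rightarrow> (nat \<Rightarrow> nat \<Rightarrow> 'l)" where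
  "mat_mul d M N = (\<lambda>r c. \<Sum>m<d. M r m * N m c)"

definition mat_pow :: "nat \<Rightarrow> (nat \<Rightarrow> nat \<Rightarrow> 'l::field) \<Rightarrow> nat \<Rightarrow> (nat \<Rightarrow> nat \<Rightarrow> 'l)" where
  "mat_pow d M k = ((mat_mul d M) ^^ k) (\<lambda>r c. if r = c \<and> r < d then 1 else 0)"

definition anderson_t_module ::
  "('a::{finite,field} poly fract \<Rightarrow> 'l::field) \<Rightarrow> nat \<Rightarrow> ('a poly \<Rightarrow> 'l twpoly) \<Rightarrow> bool" where
  "anderson_t_module \<sigma> d E \<longleftrightarrow>
     (\<forall>a. tw_wf \<sigma> d (E a)) \<and>
     (\<forall>a b. E (a + b) = tw_add (E a) (E b)) \<and>
     (\<forall>a b. E (a * b) = tw_mul CARD('a) d (E a) (E b)) \<and>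
     E 1 = tw_one d \<and>
     (\<forall>c a. E (smult c a) = (\<lambda>i r m. \<sigma> (embA [:c:]) * E a i r m)) \<and>
     (\<forall>a. mat_pow d (\<lambda>r c. E a 0 r c - (if r = c \<and> r < d then \<sigma> (embA a) else 0)) d
            = (\<lambda>_ _. 0)) \<and>
     (\<exists>i>0. E theta i \<noteq> (\<lambda>_ _. 0))"

(* Elements of  L (x)_K T_z(K_P)  are represented via the basis b of L/K:
   Y n k = coefficient of z^n on the basis vector b_k (in K_P), i.e.
   Y = sum_k b_k (x) (sum_n Y n k z^n).
   Elements of T_z(L_P)^d:  X r n k  for the r-th component. *)
definition in_Tate_LP :: "('kp::field \<Rightarrow> int) \<Rightarrow> nat \<Rightarrow> nat \<Rightarrow> (nat \<Rightarrow> nat \<Rightarrow> nat \<Rightarrow> 'kp) \<Rightarrow> bool" where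
  "in_Tate_LP w d nb X \<longleftrightarrow> (\<forall>r<d. \<forall>k<nb. \<forall>N. \<exists>M. \<forall>n. M \<le> n \<longrightarrow> small w N (X r n k))"

(* tau on L (x)_K T_z(K_P):  b_j (x) f  |->  b_j^q (x) f^{(1)}, with f^{(1)} coefficientwise q-th power *)
definition tau_LT :: "nat \<Rightarrow> ('a::field poly fract \<Rightarrow> 'l::field) \<Rightarrow> ('a poly fract \<Rightarrow> 'kp::field) \<Rightarrow>
    (nat \<Rightarrow> 'l) \<Rightarrow> nat \<Rightarrow> (nat \<Rightarrow> nat \<Rightarrow> 'kp) \<Rightarrow> (nat \<Rightarrow> nat \<Rightarrow> 'kp)" where
  "tau_LT q \<sigma> \<iota> b nb Y = (\<lambda>n k. \<Sum>j<nb. \<iota> (coord \<sigma> b nb (b j ^ q) k) * (Y n j) ^ q)"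

(* multiplication by l in L:  l * (b_j (x) f) = (l b_j) (x) f *)
definition Lmul_LT :: "('a::field poly fract \<Rightarrow> 'l::field) \<Rightarrow> ('a poly fract \<Rightarrow> 'kp::field) \<Rightarrow>
    (nat \<Rightarrow> 'l) \<Rightarrow> nat \<Rightarrow> 'l \<Rightarrow> (nat \<Rightarrow> nat \<Rightarrow> 'kp) \<Rightarrow> (nat \<Rightarrow> nat \<Rightarrow> 'kp)" where
  "Lmul_LT \<sigma> \<iota> b nb l Y = (\<lambda>n k. \<Sum>j<nb. \<iota> (coord \<sigma> b nb (l * b j) k) * Y n j)"

definition zshift :: "nat \<Rightarrow> (nat \<Rightarrow> nat \<Rightarrow> 'kp::field) \<Rightarrow> (nat \<Rightarrow> nat \<Rightarrow> 'kp)" where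
  "zshift i Y = (\<lambda>n k. if i \<le> n then Y (n - i) k else 0)"

(* z-twist  E~_a(x) = sum_i E_{a,i} z^i tau^i(x)  on T_z(L_P)^d
   (terms with i > n do not contribute to the coefficient of z^n) *)
definition ztwist :: "nat \<Rightarrow> ('a::field poly fract \<Rightarrow> 'l::field) \<Rightarrow> ('a poly fract \<Rightarrow> 'kp::field) \<Rightarrow>
    (nat \<Rightarrow> 'l) \<Rightarrow> nat \<Rightarrow> nat \<Rightarrow> 'l twpoly \<Rightarrow> (nat \<Rightarrow> nat \<Rightarrow> nat \<Rightarrow> 'kp) \<Rightarrow> (nat \<Rightarrow> nat \<Rightarrow> nat \<Rightarrow> 'kp)" where
  "ztwist q \<sigma> \<iota> b nb d F X = (\<lambda>r n k. \<Sum>i\<le>n. \<Sum>m<d.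
      zshift i (Lmul_LT \<sigma> \<iota> b nb (F i r m) ((tau_LT q \<sigma> \<iota> b nb ^^ i) (X m))) n k)"

end

theory Submission
  imports Defs
begin


lemma rh_zero: "ring_hom_fun f \<Longrightarrow> f 0 = 0"
proof -
  assume h: "ring_hom_fun f"
  have "f (0 + 0) = f 0 + f 0" using h unfolding ring_hom_fun_def by blast
  then show ?thesis by simp
qed

lemma rh_add: "ring_hom_fun f \<Longrightarrow> f (x + y) = f x + f y"
  unfolding ring_hom_fun_def by blast

lemma rh_mult: "ring_hom_fun f \<Longrightarrow> f (x * y) = f x * f y"
  unfolding ring_hom_fun_def by blast

lemma rh_one: "ring_hom_fun f \<Longrightarrow> f 1 = 1"
  unfolding ring_hom_fun_def by blast

lemma rh_diff: "ring_hom_fun f \<Longrightarrow> f (x - y) = f x - f y"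
proof -
  assume h: "ring_hom_fun f"
  have "f x = f ((x - y) + y)" by simp
  also have "\<dots> = f (x - y) + f y" using rh_add[OF h] .
  finally show ?thesis by simp
qed

lemma rh_sum: "ring_hom_fun f \<Longrightarrow> f (\<Sum>i\<in>S. g i) = (\<Sum>i\<in>S. f (g i))"
proof (induction S rule: infinite_finite_induct)
  case (infinite A) then show ?case by (simp add: rh_zero)
next
  case empty then show ?case by (simp add: rh_zero)
next
  case (insert x F) then show ?case by (simp add: rh_add)
qed

lemma rh_nonzero:
  fixes f :: "'a::field \<Rightarrow> 'b::field"
  shows "ring_hom_fun f \<Longrightarrow> x \<noteq> 0 \<Longrightarrow> f x \<noteq> 0"
proof -
  assume h: "ring_hom_fun f" and x: "x \<noteq> 0"
  have "f x * f (inverse x) = 1" using rh_mult[OF h, of x "inverse x"] rh_one[OF h] x by simp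
  then show ?thesis by auto
qed

lemma coord_repr:
  assumes "is_basis \<sigma> b nb"
  shows "l = (\<Sum>j<nb. \<sigma> (coord \<sigma> b nb l j) * b j)"
proof -
  have "\<exists>c. l = (\<Sum>j<nb. \<sigma> (c j) * b j)" using assms unfolding is_basis_def by blast
  then show ?thesis unfolding coord_def by (rule someI_ex)
qed

lemma coord_unique:
  assumes h: "ring_hom_fun \<sigma>" and bas: "is_basis \<sigma> b nb"
    and l: "l = (\<Sum>j<nb. \<sigma> (x j) * b j)" and k: "k < nb"
  shows "coord \<sigma> b nb l k = x k"
proof -
  have "(\<Sum>j<nb. \<sigma> (coord \<sigma> b nb l j - x j) * b j)
      = (\<Sum>j<nb. \<sigma> (coord \<sigma> b nb l j) * b j) - (\<Sum>j<nb. \<sigma> (x j) * b j)"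
    by (simp add: rh_diff[OF h] sum_subtractf left_diff_distrib)
  also have "\<dots> = 0" using coord_repr[OF bas, of l] l by simp
  moreover have ind: "\<forall>c. (\<Sum>j<nb. \<sigma> (c j) * b j) = 0 \<longrightarrow> (\<forall>j<nb. c j = 0)"
    using bas unfolding is_basis_def by blast
  ultimately have "\<forall>j<nb. coord \<sigma> b nb l j - x j = 0"
    using ind[rule_format, of "\<lambda>j. coord \<sigma> b nb l j - x j"] by simp
  then show ?thesis using k by simp
qed

definition Cm where "Cm \<sigma> b nb l k j = coord \<sigma> b nb (l * b j) k"

lemma Cm_repr: "is_basis \<sigma> b nb \<Longrightarrow> l * b j = (\<Sum>i<nb. \<sigma> (Cm \<sigma> b nb l i j) * b i)"
  unfolding Cm_def by (rule coord_repr)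

lemma Cm_add:
  assumes h: "ring_hom_fun \<sigma>" and bas: "is_basis \<sigma> b nb" and k: "k < nb"
  shows "Cm \<sigma> b nb (l1 + l2) k j = Cm \<sigma> b nb l1 k j + Cm \<sigma> b nb l2 k j"
proof -
  have "(l1 + l2) * b j = l1 * b j + l2 * b j" by (simp add: distrib_right)
  also have "\<dots> = (\<Sum>i<nb. \<sigma> (Cm \<sigma> b nb l1 i j + Cm \<sigma> b nb l2 i j) * b i)"
    by (subst Cm_repr[OF bas, of l1], subst Cm_repr[OF bas, of l2])
       (simp add: rh_add[OF h] distrib_right sum.distrib)
  finally have eq: "(l1 + l2) * b j = (\<Sum>i<nb. \<sigma> (Cm \<sigma> b nb l1 i j + Cm \<sigma> b nb l2 i j) * b i)" .
  from coord_unique[OF h bas eq k] show ?thesis by (simp add: Cm_def)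
qed

lemma Cm_zero:
  assumes h: "ring_hom_fun \<sigma>" and bas: "is_basis \<sigma> b nb" and k: "k < nb"
  shows "Cm \<sigma> b nb 0 k j = 0"
proof -
  have "0 * b j = (\<Sum>i<nb. \<sigma> ((\<lambda>_. 0) i) * b i)" by (simp add: rh_zero[OF h])
  from coord_unique[OF h bas this k] show ?thesis by (simp add: Cm_def)
qed

lemma Cm_sum:
  assumes h: "ring_hom_fun \<sigma>" and bas: "is_basis \<sigma> b nb" and k: "k < nb"
  shows "Cm \<sigma> b nb (\<Sum>s\<in>S. g s) k j = (\<Sum>s\<in>S. Cm \<sigma> b nb (g s) k j)"
proof (induction S rule: infinite_finite_induct)
  case (infinite A) then show ?case by (simp add: Cm_zero[OF h bas k])
next
  case empty then show ?case by (simp add: Cm_zero[OF h bas k])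
next
  case (insert x F) then show ?case by (simp add: Cm_add[OF h bas k])
qed

lemma Cm_mul:
  assumes h: "ring_hom_fun \<sigma>" and bas: "is_basis \<sigma> b nb" and k: "k < nb"
  shows "Cm \<sigma> b nb (l1 * l2) k i = (\<Sum>j<nb. Cm \<sigma> b nb l1 k j * Cm \<sigma> b nb l2 j i)"
proof -
  have "(l1 * l2) * b i = l1 * (\<Sum>j<nb. \<sigma> (Cm \<sigma> b nb l2 j i) * b j)"
    using Cm_repr[OF bas, of l2 i] by (simp add: mult.assoc)
  also have "\<dots> = (\<Sum>j<nb. \<sigma> (Cm \<sigma> b nb l2 j i) * (l1 * b j))"
    by (simp add: sum_distrib_left mult_ac)
  also have "\<dots> = (\<Sum>j<nb. \<sigma> (Cm \<sigma> b nb l2 j i) * (\<Sum>k<nb. \<sigma> (Cm \<sigma> b nb l1 k j) * b k))"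
    by (subst Cm_repr[OF bas, of l1]) simp
  also have "\<dots> = (\<Sum>j<nb. \<Sum>k<nb. \<sigma> (Cm \<sigma> b nb l1 k j * Cm \<sigma> b nb l2 j i) * b k)"
    by (simp add: sum_distrib_left rh_mult[OF h] mult_ac)
  also have "\<dots> = (\<Sum>k<nb. \<Sum>j<nb. \<sigma> (Cm \<sigma> b nb l1 k j * Cm \<sigma> b nb l2 j i) * b k)"
    by (rule sum.swap)
  also have "\<dots> = (\<Sum>k<nb. \<sigma> (\<Sum>j<nb. Cm \<sigma> b nb l1 k j * Cm \<sigma> b nb l2 j i) * b k)"
    by (simp add: rh_sum[OF h] sum_distrib_right)
  finally have eq: "l1 * l2 * b i = (\<Sum>k<nb. \<sigma> (\<Sum>j<nb. Cm \<sigma> b nb l1 k j * Cm \<sigma> b nb l2 j i) * b k)" .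
  from coord_unique[OF h bas eq k] show ?thesis by (simp add: Cm_def)
qed

lemma Cm_scal:
  assumes h: "ring_hom_fun \<sigma>" and bas: "is_basis \<sigma> b nb" and k: "k < nb" and i: "i < nb"
  shows "Cm \<sigma> b nb (\<sigma> x) k i = (if k = i then x else 0)"
proof -
  have "(\<Sum>j<nb. \<sigma> ((\<lambda>j. if j = i then x else 0) j) * b j) = (\<Sum>j<nb. if j = i then \<sigma> x * b i else 0)"
    by (rule sum.cong) (auto simp: rh_zero[OF h])
  also have "\<dots> = \<sigma> x * b i" using i by simp
  finally have "\<sigma> x * b i = (\<Sum>j<nb. \<sigma> ((\<lambda>j. if j = i then x else 0) j) * b j)" by simp
  from coord_unique[OF h bas this k] show ?thesis by (simp add: Cm_def)
qed


definition Tm where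
  "Tm \<sigma> \<iota> b nb (d::nat) F v = (\<lambda>r k. \<Sum>m<d. \<Sum>j<nb. \<iota> (Cm \<sigma> b nb (F r m) k j) * v m j)"

lemma Tm_cong: "(\<And>m j. m < d \<Longrightarrow> j < nb \<Longrightarrow> v m j = v' m j) \<Longrightarrow>
    Tm \<sigma> \<iota> b nb d F v = Tm \<sigma> \<iota> b nb d F v'"
  unfolding Tm_def by (intro ext sum.cong) auto

lemma Tm_scale: fixes s :: "'k::field" shows "Tm \<sigma> \<iota> b nb d F (\<lambda>m j. s * v m j) r k = s * Tm \<sigma> \<iota> b nb d F v r k"
  unfolding Tm_def by (simp add: sum_distrib_left mult_ac)

lemma Tm_zero:
  assumes h: "ring_hom_fun \<sigma>" and bas: "is_basis \<sigma> b nb" and hi: "ring_hom_fun \<iota>" and k: "k < nb"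
  shows "Tm \<sigma> \<iota> b nb d (\<lambda>_ _. 0) v r k = 0"
  unfolding Tm_def by (simp add: Cm_zero[OF h bas k] rh_zero[OF hi])

lemma Tm_add:
  assumes h: "ring_hom_fun \<sigma>" and bas: "is_basis \<sigma> b nb" and hi: "ring_hom_fun \<iota>" and k: "k < nb"
  shows "Tm \<sigma> \<iota> b nb d (\<lambda>r c. F r c + G r c) v r k = Tm \<sigma> \<iota> b nb d F v r k + Tm \<sigma> \<iota> b nb d G v r k"
  unfolding Tm_def by (simp add: Cm_add[OF h bas k] rh_add[OF hi] distrib_right sum.distrib)

lemma Tm_diag:
  assumes h: "ring_hom_fun \<sigma>" and bas: "is_basis \<sigma> b nb" and hi: "ring_hom_fun \<iota>" and k: "k < nb"
    and r: "r < d"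
  shows "Tm \<sigma> \<iota> b nb d (\<lambda>r c. if r = c \<and> r < d then \<sigma> x else 0) v r k = \<iota> x * v r k"
proof -
  have "Tm \<sigma> \<iota> b nb d (\<lambda>r c. if r = c \<and> r < d then \<sigma> x else 0) v r k
     = (\<Sum>m<d. if m = r then (\<Sum>j<nb. \<iota> (Cm \<sigma> b nb (\<sigma> x) k j) * v m j) else 0)"
    unfolding Tm_def using r by (intro sum.cong) (auto simp: Cm_zero[OF h bas k] rh_zero[OF hi])
  also have "\<dots> = (\<Sum>j<nb. \<iota> (Cm \<sigma> b nb (\<sigma> x) k j) * v r j)" using r by (subst sum.delta[OF finite_lessThan]) simp
  also have "\<dots> = (\<Sum>j<nb. if j = k then \<iota> x * v r k else 0)"
    by (intro sum.cong) (auto simp: Cm_scal[OF h bas k] rh_zero[OF hi])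
  also have "\<dots> = \<iota> x * v r k" using k by simp
  finally show ?thesis .
qed

lemma Tm_mul:
  assumes h: "ring_hom_fun \<sigma>" and bas: "is_basis \<sigma> b nb" and hi: "ring_hom_fun \<iota>" and k: "k < nb"
  shows "Tm \<sigma> \<iota> b nb d F (Tm \<sigma> \<iota> b nb d G v) r k = Tm \<sigma> \<iota> b nb d (mat_mul d F G) v r k"
proof -
  let ?C = "Cm \<sigma> b nb"
  have "Tm \<sigma> \<iota> b nb d F (Tm \<sigma> \<iota> b nb d G v) r k
     = (\<Sum>m<d. \<Sum>j<nb. \<Sum>m'<d. \<Sum>j'<nb. \<iota> (?C (F r m) k j) * \<iota> (?C (G m m') j j') * v m' j')"
    unfolding Tm_def by (simp add: sum_distrib_left mult_ac)
  also have "\<dots> = (\<Sum>m<d. \<Sum>m'<d. \<Sum>j<nb. \<Sum>j'<nb. \<iota> (?C (F r m) k j) * \<iota> (?C (G m m') j j') * v m' j')"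
    by (rule sum.cong[OF refl], rule sum.swap)
  also have "\<dots> = (\<Sum>m'<d. \<Sum>m<d. \<Sum>j<nb. \<Sum>j'<nb. \<iota> (?C (F r m) k j) * \<iota> (?C (G m m') j j') * v m' j')"
    by (rule sum.swap)
  also have "\<dots> = (\<Sum>m'<d. \<Sum>m<d. \<Sum>j'<nb. \<Sum>j<nb. \<iota> (?C (F r m) k j) * \<iota> (?C (G m m') j j') * v m' j')"
    by (rule sum.cong[OF refl], rule sum.cong[OF refl], rule sum.swap)
  also have "\<dots> = (\<Sum>m'<d. \<Sum>j'<nb. \<Sum>m<d. \<Sum>j<nb. \<iota> (?C (F r m) k j) * \<iota> (?C (G m m') j j') * v m' j')"
    by (rule sum.cong[OF refl], rule sum.swap)
  also have "\<dots> = Tm \<sigma> \<iota> b nb d (mat_mul d F G) v r k"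
    unfolding Tm_def mat_mul_def
    by (simp add: Cm_sum[OF h bas k] Cm_mul[OF h bas k] rh_sum[OF hi] rh_mult[OF hi]
        sum_distrib_right mult_ac)
  finally show ?thesis .
qed

lemma tau_zero:
  assumes q: "q > 0" and Y: "\<forall>j<nb. Y n j = 0"
  shows "\<forall>k<nb. ((tau_LT q \<sigma> \<iota> b nb) ^^ i) Y n k = 0"
proof (induction i)
  case 0 then show ?case using Y by simp
next
  case (Suc i) then show ?case using q by (simp add: tau_LT_def zero_power)
qed


theorem mainTheorem20:
  fixes \<sigma> :: "'a::{finite,field} poly fract \<Rightarrow> 'l::field"
    and \<iota> :: "'a poly fract \<Rightarrow> 'kp::field"
    and w :: "'kp \<Rightarrow> int"
    and b :: "nat \<Rightarrow> 'l" and nb d :: nat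
    and E :: "'a poly \<Rightarrow> 'l twpoly"
    and P a :: "'a poly"
    and X :: "nat \<Rightarrow> nat \<Rightarrow> nat \<Rightarrow> 'kp"
  assumes "ring_hom_fun \<sigma>"
    and "is_basis \<sigma> b nb"
    and "anderson_t_module \<sigma> d E"
    and "lead_coeff P = 1" and "irreducible P"
    and "is_P_adic_completion P \<iota> w"
    and "a \<noteq> 0"
    and "in_Tate_LP w d nb X"
    and "\<exists>r<d. \<exists>n. \<exists>k<nb. X r n k \<noteq> 0"
  shows "\<exists>r<d. \<exists>n. \<exists>k<nb. ztwist CARD('a) \<sigma> \<iota> b nb d (E a) X r n k \<noteq> 0"
proof -
  let ?q = "CARD('a)"
  have q: "?q > 0" by simp
  have h: "ring_hom_fun \<sigma>" and bas: "is_basis \<sigma> b nb" using assms by auto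
  have hi: "ring_hom_fun \<iota>" using assms(6) unfolding is_P_adic_completion_def by blast
  define D where "D = (\<lambda>r c. if r = c \<and> r < d then \<sigma> (embA a) else 0)"
  define N where "N = (\<lambda>r c. E a 0 r c - D r c)"
  have nilp: "mat_pow d N d = (\<lambda>_ _. 0)"
    using assms(3) unfolding anderson_t_module_def N_def D_def by blast
  define P' where "P' n = (\<exists>r<d. \<exists>k<nb. X r n k \<noteq> 0)" for n
  have ex: "\<exists>n. P' n" using assms(9) unfolding P'_def by blast
  define n0 where "n0 = (LEAST n. P' n)"
  have Pn0: "P' n0" unfolding n0_def using ex by (metis LeastI_ex)
  have below: "\<forall>r<d. \<forall>k<nb. X r n k = 0" if "n < n0" for n
    using not_less_Least[OF that[unfolded n0_def]] unfolding P'_def by blast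
  define v where "v = (\<lambda>m j. X m n0 j)"
  have ztw: "ztwist ?q \<sigma> \<iota> b nb d (E a) X r n0 k = Tm \<sigma> \<iota> b nb d (E a 0) v r k"
    if r: "r < d" and k: "k < nb" for r k
  proof -
    define g where "g i = (\<Sum>m<d. zshift i (Lmul_LT \<sigma> \<iota> b nb (E a i r m)
        ((tau_LT ?q \<sigma> \<iota> b nb ^^ i) (X m))) n0 k)" for i
    have gz: "g i = 0" if i: "i \<in> {..n0} - {0}" for i
    proof -
      have lt: "n0 - i < n0" using i by auto
      have "g i = (\<Sum>m<d. \<Sum>j<nb. \<iota> (coord \<sigma> b nb (E a i r m * b j) k) *
          (tau_LT ?q \<sigma> \<iota> b nb ^^ i) (X m) (n0 - i) j)"
        unfolding g_def zshift_def Lmul_LT_def using i by simp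
      also have "\<dots> = 0"
      proof (intro sum.neutral ballI)
        fix m j assume m: "m \<in> {..<d}" and j: "j \<in> {..<nb}"
        have "\<forall>j<nb. X m (n0 - i) j = 0" using below[OF lt] m by simp
        then have "(tau_LT ?q \<sigma> \<iota> b nb ^^ i) (X m) (n0 - i) j = 0"
          using tau_zero[OF q, of nb "X m" "n0 - i"] j by blast
        then show "\<iota> (coord \<sigma> b nb (E a i r m * b j) k) *
          (tau_LT ?q \<sigma> \<iota> b nb ^^ i) (X m) (n0 - i) j = 0" by simp
      qed
      finally show ?thesis .
    qed
    have "ztwist ?q \<sigma> \<iota> b nb d (E a) X r n0 k = (\<Sum>i\<le>n0. g i)"
      unfolding ztwist_def g_def by simp
    also have "\<dots> = g 0 + (\<Sum>i\<in>{..n0} - {0}. g i)"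
      by (rule sum.remove) auto
    also have "\<dots> = g 0" using gz by simp
    also have "\<dots> = Tm \<sigma> \<iota> b nb d (E a 0) v r k"
      unfolding g_def Tm_def zshift_def Lmul_LT_def Cm_def v_def by simp
    finally show ?thesis .
  qed
  show ?thesis
  proof (rule ccontr)
    assume "\<not> ?thesis"
    then have T0: "Tm \<sigma> \<iota> b nb d (E a 0) v r k = 0" if "r < d" "k < nb" for r k
      using ztw[OF that] that by auto
    define s where "s = - \<iota> (embA a)"
    have E0: "E a 0 = (\<lambda>r c. N r c + D r c)" unfolding N_def by auto
    have TN: "Tm \<sigma> \<iota> b nb d N v r k = s * v r k" if r: "r < d" and k: "k < nb" for r k
    proof -
      have "0 = Tm \<sigma> \<iota> b nb d N v r k + Tm \<sigma> \<iota> b nb d D v r k"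
        using T0[OF r k] unfolding E0 Tm_add[OF h bas hi k] by simp
      moreover have "Tm \<sigma> \<iota> b nb d D v r k = \<iota> (embA a) * v r k"
        unfolding D_def by (rule Tm_diag[OF h bas hi k r])
      ultimately show ?thesis unfolding s_def by (simp add: eq_neg_iff_add_eq_0 add.commute)
    qed
    have pow: "\<forall>r<d. \<forall>k<nb. Tm \<sigma> \<iota> b nb d (mat_pow d N i) v r k = s ^ i * v r k" for i
    proof (induction i)
      case 0
      have "mat_pow d N 0 = (\<lambda>r c. if r = c \<and> r < d then \<sigma> 1 else 0)"
        unfolding mat_pow_def funpow_0 rh_one[OF h] by (rule refl)
      show ?case
      proof (intro allI impI)
        fix r k assume r: "r < d" and k: "k < nb"
        have "Tm \<sigma> \<iota> b nb d (mat_pow d N 0) v r k = \<iota> 1 * v r k"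
          unfolding \<open>mat_pow d N 0 = _\<close> by (rule Tm_diag[OF h bas hi k r])
        then show "Tm \<sigma> \<iota> b nb d (mat_pow d N 0) v r k = s ^ 0 * v r k"
          unfolding rh_one[OF hi] by simp
      qed
    next
      case (Suc i)
      show ?case
      proof (intro allI impI)
        fix r k assume r: "r < d" and k: "k < nb"
        have "mat_pow d N (Suc i) = mat_mul d N (mat_pow d N i)"
          unfolding mat_pow_def by simp
        then have "Tm \<sigma> \<iota> b nb d (mat_pow d N (Suc i)) v r k
            = Tm \<sigma> \<iota> b nb d N (Tm \<sigma> \<iota> b nb d (mat_pow d N i) v) r k"
          using Tm_mul[OF h bas hi k] by simp
        also have "\<dots> = Tm \<sigma> \<iota> b nb d N (\<lambda>m j. s ^ i * v m j) r k"
        proof -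
          have "Tm \<sigma> \<iota> b nb d N (Tm \<sigma> \<iota> b nb d (mat_pow d N i) v) = Tm \<sigma> \<iota> b nb d N (\<lambda>m j. s ^ i * v m j)"
            by (rule Tm_cong) (use Suc.IH in blast)
          then show ?thesis by simp
        qed
        also have "\<dots> = s ^ i * (s * v r k)" by (simp add: Tm_scale TN[OF r k])
        finally show "Tm \<sigma> \<iota> b nb d (mat_pow d N (Suc i)) v r k = s ^ Suc i * v r k" by simp
      qed
    qed
    have "embA a \<noteq> 0"
    proof
      assume "embA a = 0"
      then have "Fract a 1 = Fract 0 1" unfolding embA_def by (simp add: fract_collapse)
      then show False using assms(7) by (simp add: eq_fract)
    qed
    then have "s \<noteq> 0" unfolding s_def using rh_nonzero[OF hi] by simp
    have "v r k = 0" if r: "r < d" and k: "k < nb" for r k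
    proof -
      have "Tm \<sigma> \<iota> b nb d (mat_pow d N d) v r k = s ^ d * v r k" using pow[of d] r k by blast
      then have "s ^ d * v r k = 0" unfolding nilp Tm_zero[OF h bas hi k] by simp
      then show ?thesis using \<open>s \<noteq> 0\<close> by simp
    qed
    then show False using Pn0 unfolding P'_def v_def by blast
  qed
qed

end
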